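(* Let $X$ be a finite-dimensional Euclidean space and $C\subset X$ a cone. Then $C$ is smooth if and only if both $C$ and its polar cone $C^\circ$ are strictly convex.
   Context: A cone $C$ is regular if it is pointed, closed, convex, with nonempty interior. $C^\circ=\{y:\langle x,y\rangle\le0\ \forall x\in C\}$. A convex subset $\mathcal F\subset C$ is a face if whenever $x,y\in C$ and $\lambda x+(1-\lambda)y\in\mathcal F$ for some $0<\lambda<1$, then $x,y\in\mathcal F$. A ray is $\{\lambda x:\lambda\ge0\}$, $x\neq0$; an extreme ray is a ray in $C$ that is a face. A regular cone is strictly convex if every face other than the cone itself and $\{0\}$ has dimension one. A regular cone $C$ is smooth if every boundary point of $C$ lies on an extreme ray of $C$ and, for every non-zero point $x$ of any extreme ray, the normal cone $N_C(x)$ has dimension one. *)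

theory Defs
  imports "HOL-Analysis.Analysis"
begin

definition pointed_cone :: "'a::euclidean_space set \<Rightarrow> bool" where
  "pointed_cone C \<longleftrightarrow> C \<inter> uminus ` C \<subseteq> {0}"

definition regular_cone :: "'a::euclidean_space set \<Rightarrow> bool" where
  "regular_cone C \<longleftrightarrow> cone C \<and> pointed_cone C \<and> closed C \<and> convex C \<and> interior C \<noteq> {}"

definition polar_cone :: "'a::euclidean_space set \<Rightarrow> 'a set" where
  "polar_cone C = {y. \<forall>x\<in>C. inner x y \<le> 0}"

definition ray :: "'a::euclidean_space \<Rightarrow> 'a set" where
  "ray x = {c *\<^sub>R x | c. c \<ge> 0}"

definition extreme_ray :: "'a::euclidean_space set \<Rightarrow> 'a set \<Rightarrow> bool" where
  "extreme_ray C R \<longleftrightarrow> (\<exists>x. x \<noteq> 0 \<and> R = ray x \<and> R face_of C)"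

definition normal_cone :: "'a::euclidean_space set \<Rightarrow> 'a \<Rightarrow> 'a set" where
  "normal_cone C x = {y. \<forall>z\<in>C. inner (z - x) y \<le> 0}"

text \<open>Faces are taken nonempty (every nonempty face of a cone contains 0);
  dimension of a face = dimension of its linear span.\<close>
definition strictly_convex_cone :: "'a::euclidean_space set \<Rightarrow> bool" where
  "strictly_convex_cone C \<longleftrightarrow> regular_cone C \<and>
     (\<forall>F. F face_of C \<and> F \<noteq> {} \<and> F \<noteq> C \<and> F \<noteq> {0} \<longrightarrow> dim F = 1)"

definition smooth_cone :: "'a::euclidean_space set \<Rightarrow> bool" where
  "smooth_cone C \<longleftrightarrow> regular_cone C \<and>
     (\<forall>x\<in>frontier C. \<exists>R. extreme_ray C R \<and> x \<in> R) \<and>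
     (\<forall>R x. extreme_ray C R \<and> x \<in> R \<and> x \<noteq> 0 \<longrightarrow> dim (normal_cone C x) = 1)"

end

theory Submission
  imports Defs
begin

lemma hyp_zero:
  fixes x :: "'a::euclidean_space"
  assumes "interior S \<noteq> {}" "S \<subseteq> {z. inner x z = 0}"
  shows "x = 0"
proof (rule ccontr)
  assume x: "x \<noteq> 0"
  obtain y where "y \<in> interior S" using assms(1) by blast
  then obtain e where e: "e > 0" "ball y e \<subseteq> S" using mem_interior by blast
  define z where "z = y + (e/2/norm x) *\<^sub>R x"
  have "dist y z = e/2" using x e by (simp add: z_def dist_norm)
  then have "z \<in> S" "y \<in> S" using e by auto
  then have "inner x z = 0" "inner x y = 0" using assms(2) by auto
  then have "(e/2/norm x) * inner x x = 0" by (simp add: z_def inner_add_right)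
  then show False using x e by simp
qed

lemma cone_has0: "cone C \<Longrightarrow> x \<in> C \<Longrightarrow> 0 \<in> C"
  unfolding cone_def by (metis scale_zero_left order_refl)

lemma cone_support:
  fixes C :: "'a::euclidean_space set"
  assumes "cone C" "closed C" "convex C" "interior C \<noteq> {}" "x \<in> frontier C"
  shows "\<exists>a. a \<noteq> 0 \<and> a \<in> polar_cone C \<and> inner x a = 0"
proof -
  have xC: "x \<in> C" using assms(2,5) frontier_subset_closed by blast
  have "x \<notin> interior C" using assms(5) by (simp add: frontier_def)
  then have "x \<notin> rel_interior C" using assms(4) rel_interior_nonempty_interior
    by metis
  then obtain a where a: "a \<noteq> 0" "\<And>y. y \<in> closure C \<Longrightarrow> a \<bullet> x \<le> a \<bullet> y"
    using supporting_hyperplane_relative_frontier[OF assms(3)] xC closure_subset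
    by (metis subsetD)
  have ay: "a \<bullet> x \<le> a \<bullet> y" if "y \<in> C" for y using a(2) that closure_subset by blast
  have "0 \<in> C" using cone_has0 assms(1) xC by blast
  then have 1: "a \<bullet> x \<le> 0" using ay by fastforce
  have "2 *\<^sub>R x \<in> C" using assms(1) xC unfolding cone_def by simp
  then have "a \<bullet> x \<le> 2 * (a \<bullet> x)" using ay by fastforce
  with 1 have ax: "a \<bullet> x = 0" by simp
  show ?thesis
  proof (intro exI conjI)
    show "- a \<noteq> 0" using a by simp
    show "- a \<in> polar_cone C" using ay ax by (simp add: polar_cone_def inner_commute)
    show "inner x (-a) = 0" using ax by (simp add: inner_commute)
  qed
qed

lemma bipolar:
  fixes C :: "'a::euclidean_space set"
  assumes "cone C" "closed C" "convex C" "C \<noteq> {}"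
  shows "polar_cone (polar_cone C) \<subseteq> C"
proof
  fix z assume zp: "z \<in> polar_cone (polar_cone C)"
  show "z \<in> C"
  proof (rule ccontr)
    assume "z \<notin> C"
    then obtain a b where ab: "inner a z < b" "\<forall>x\<in>C. inner a x > b"
      using separating_hyperplane_closed_point[OF assms(3,2)] by blast
    have "0 \<in> C" using assms(1,4) cone_has0 by blast
    then have b: "b < 0" using ab by fastforce
    have nn: "inner a x \<ge> 0" if "x \<in> C" for x
    proof (rule ccontr)
      assume "\<not> inner a x \<ge> 0"
      then have n: "inner a x < 0" by simp
      define t where "t = b / inner a x"
      have "t \<ge> 0" using b n by (simp add: t_def zero_le_divide_iff)
      then have "t *\<^sub>R x \<in> C" using assms(1) that unfolding cone_def by blast
      then have "inner a (t *\<^sub>R x) > b" using ab by blast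
      moreover have "inner a (t *\<^sub>R x) = b" using n by (simp add: t_def)
      ultimately show False by simp
    qed
    have "- a \<in> polar_cone C" using nn by (simp add: polar_cone_def inner_commute)
    then have "inner (-a) z \<le> 0" using zp unfolding polar_cone_def by blast
    then show False using ab b by simp
  qed
qed

lemma polar_cone_cone: "cone (polar_cone C)"
  unfolding cone_def polar_cone_def by (auto simp: mult_nonneg_nonpos)

lemma polar_cone_Inter: "polar_cone C = (\<Inter>x\<in>C. {y. inner x y \<le> 0})"
  unfolding polar_cone_def by auto

lemma polar_closed: "closed (polar_cone C)"
  unfolding polar_cone_Inter by (intro closed_INT ballI closed_halfspace_le)

lemma polar_convex: "convex (polar_cone C)"
  unfolding polar_cone_Inter by (intro convex_INT ballI convex_halfspace_le)

lemma zero_polar: "0 \<in> polar_cone C"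
  unfolding polar_cone_def by simp

lemma regular_facts:
  assumes "regular_cone C"
  shows "cone C" "closed C" "convex C" "interior C \<noteq> {}" "C \<noteq> {}" "0 \<in> C"
    "\<And>x. x \<in> C \<Longrightarrow> - x \<in> C \<Longrightarrow> x = 0"
proof -
  show c: "cone C" "closed C" "convex C" "interior C \<noteq> {}" using assms
    unfolding regular_cone_def by auto
  then show "C \<noteq> {}" using interior_subset by blast
  then show "0 \<in> C" using c cone_has0 by blast
  fix x assume "x \<in> C" "- x \<in> C"
  then have "x \<in> C \<inter> uminus ` C" by (metis IntI image_eqI minus_minus)
  then show "x = 0" using assms unfolding regular_cone_def pointed_cone_def by blast
qed

lemma polar_regular:
  fixes C :: "'a::euclidean_space set"
  assumes "regular_cone C"
  shows "regular_cone (polar_cone C)"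
proof -
  note R = regular_facts[OF assms]
  have pt: "pointed_cone (polar_cone C)"
    unfolding pointed_cone_def
  proof
    fix y assume "y \<in> polar_cone C \<inter> uminus ` polar_cone C"
    then have a: "y \<in> polar_cone C" "- y \<in> polar_cone C" by auto
    have "C \<subseteq> {z. inner y z = 0}"
    proof
      fix z assume "z \<in> C"
      then have "inner z y \<le> 0" "inner z (-y) \<le> 0" using a unfolding polar_cone_def by auto
      then show "z \<in> {z. inner y z = 0}" by (simp add: inner_commute)
    qed
    then show "y \<in> {0}" using hyp_zero R(4) by blast
  qed
  have int: "interior (polar_cone C) \<noteq> {}"
  proof
    assume "interior (polar_cone C) = {}"
    then obtain a b where ab: "a \<noteq> 0" "polar_cone C \<subseteq> {x. a \<bullet> x = b}"
      using empty_interior_subset_hyperplane[OF polar_convex] by blast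
    have "b = 0" using ab(2) zero_polar by fastforce
    then have "a \<in> polar_cone (polar_cone C)" "- a \<in> polar_cone (polar_cone C)"
      using ab(2) unfolding polar_cone_def[of "polar_cone C"] by (auto simp: inner_commute)
    then have "a \<in> C" "- a \<in> C" using bipolar[OF R(1,2,3,5)] by auto
    then show False using R(7) ab(1) by blast
  qed
  show ?thesis unfolding regular_cone_def
    using polar_cone_cone pt polar_closed polar_convex int by blast
qed

lemma normal_eq:
  assumes "cone C" "x \<in> C"
  shows "normal_cone C x = polar_cone C \<inter> {y. inner x y = 0}"
proof (intro set_eqI iffI)
  fix y assume y: "y \<in> normal_cone C x"
  have "0 \<in> C" using assms cone_has0 by blast
  then have 1: "inner (0 - x) y \<le> 0" using y unfolding normal_cone_def by blast
  have "2 *\<^sub>R x \<in> C" using assms unfolding cone_def by simp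
  then have 2: "inner (2 *\<^sub>R x - x) y \<le> 0" using y unfolding normal_cone_def by blast
  have ix: "inner x y = 0" using 1 2 by (simp add: algebra_simps inner_diff_left)
  have "inner z y \<le> 0" if "z \<in> C" for z
    using y that ix unfolding normal_cone_def by (force simp: inner_diff_left)
  then show "y \<in> polar_cone C \<inter> {y. inner x y = 0}" using ix by (simp add: polar_cone_def)
next
  fix y assume "y \<in> polar_cone C \<inter> {y. inner x y = 0}"
  then show "y \<in> normal_cone C x"
    unfolding normal_cone_def polar_cone_def by (auto simp: inner_diff_left)
qed

lemma normal_face:
  assumes "cone C" "x \<in> C"
  shows "normal_cone C x face_of polar_cone C"
  unfolding normal_eq[OF assms]
  by (rule face_of_Int_supporting_hyperplane_le[OF polar_convex])
     (use assms(2) in \<open>auto simp: polar_cone_def\<close>)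

lemma nonzero_frontier:
  fixes C :: "'a::euclidean_space set"
  assumes "regular_cone C" "DIM('a) \<ge> 2"
  shows "\<exists>q. q \<in> frontier C \<and> q \<noteq> 0"
proof -
  note R = regular_facts[OF assms(1)]
  obtain y0 where y0: "y0 \<in> interior C" using R(4) by blast
  have y0C: "y0 \<in> C" using y0 interior_subset by blast
  have "y0 \<noteq> 0"
  proof
    assume "y0 = 0"
    then obtain e where e: "e > 0" "ball 0 e \<subseteq> C" using y0 mem_interior by blast
    obtain b :: 'a where b: "b \<in> Basis" using nonempty_Basis by blast
    define v where "v = (e/2) *\<^sub>R b"
    have "norm v = e/2" using b e by (simp add: v_def)
    then have "v \<in> C" "- v \<in> C" using e by auto
    then have "v = 0" using R(7) by blast
    then show False using b e by (simp add: v_def)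
  qed
  have "dim (span {y0}) < DIM('a)" using assms(2) by (simp add: dim_span)
  then have "span {y0} \<noteq> UNIV" using dim_UNIV by (metis dim_span less_irrefl)
  then obtain w where w: "w \<notin> span {y0}" by blast
  then have w0: "w \<noteq> 0" using span_zero by metis
  have "- y0 \<notin> C" using R(7) y0C \<open>y0 \<noteq> 0\<close> by fastforce
  moreover have "open (- C)" using R(2) by (simp add: open_Compl)
  ultimately obtain r where r: "r > 0" "ball (- y0) r \<subseteq> - C"
    using open_contains_ball by blast
  define p where "p = - y0 + (r/2/norm w) *\<^sub>R w"
  have "dist (- y0) p = r/2" using w0 r by (simp add: p_def dist_norm)
  then have "p \<in> ball (- y0) r" using r by simp
  then have pC: "p \<notin> C" using r by blast
  have "closed_segment y0 p \<inter> frontier C \<noteq> {}"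
    by (rule connected_Int_frontier) (use y0C pC in auto)
  then obtain q where q: "q \<in> closed_segment y0 p" "q \<in> frontier C" by blast
  then obtain u where u: "0 \<le> u" "u \<le> 1" "q = (1 - u) *\<^sub>R y0 + u *\<^sub>R p"
    unfolding closed_segment_def by blast
  have "q \<noteq> 0"
  proof
    assume q0: "q = 0"
    have eq: "q = (1 - 2*u) *\<^sub>R y0 + (u * (r/2/norm w)) *\<^sub>R w"
      using u(3) unfolding p_def scaleR_add_right scaleR_diff_left scaleR_scaleR
      by (simp add: algebra_simps scaleR_2 flip: scaleR_add_left)
    show False
    proof (cases "u = 0")
      case True then show ?thesis using q0 u(3) \<open>y0 \<noteq> 0\<close> by simp
    next
      case False
      have c: "u * (r/2/norm w) \<noteq> 0" using False r w0 by simp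
      have "(u * (r/2/norm w)) *\<^sub>R w = - ((1 - 2*u) *\<^sub>R y0)" using eq q0
        by (simp add: eq_neg_iff_add_eq_0 add.commute)
      then have hm: "(u * (r/2/norm w)) *\<^sub>R w = (- (1 - 2*u)) *\<^sub>R y0"
        by (metis scaleR_minus_left)
      have "w = (1 / (u * (r/2/norm w))) *\<^sub>R ((u * (r/2/norm w)) *\<^sub>R w)"
        using c by simp
      also have "\<dots> = (1 / (u * (r/2/norm w))) *\<^sub>R ((- (1 - 2*u)) *\<^sub>R y0)"
        using hm by simp
      finally have "w = ((1 / (u * (r/2/norm w))) * (- (1 - 2*u))) *\<^sub>R y0"
        by (simp only: scaleR_scaleR)
      then have "w \<in> span {y0}" by (metis span_base span_scale singletonI)
      then show False using w by simp
    qed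
  qed
  then show ?thesis using q by blast
qed

lemma ray_sub_span: "ray x \<subseteq> span {x}"
  unfolding ray_def by (auto intro: span_scale span_base)

lemma dim_ray: "dim (ray x) \<le> 1"
proof -
  have "dim (ray x) \<le> dim (span {x})" by (rule dim_subset[OF ray_sub_span])
  also have "\<dots> = dim {x}" by (rule dim_span)
  also have "\<dots> \<le> 1" by simp
  finally show ?thesis .
qed

lemma exray:
  fixes C :: "'a::euclidean_space set"
  assumes "regular_cone C" "strictly_convex_cone C" "x \<in> frontier C" "x \<noteq> 0"
  shows "extreme_ray C (ray x)"
proof -
  note R = regular_facts[OF assms(1)]
  have xC: "x \<in> C" using assms(3) R(2) frontier_subset_closed by blast
  obtain a where a: "a \<noteq> 0" "a \<in> polar_cone C" "inner x a = 0"
    using cone_support[OF R(1,2,3,4) assms(3)] by blast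
  define E where "E = C \<inter> {z. a \<bullet> z = 0}"
  have Ef: "E face_of C" unfolding E_def
    by (rule face_of_Int_supporting_hyperplane_le[OF R(3)])
       (use a(2) in \<open>auto simp: polar_cone_def inner_commute\<close>)
  have xE: "x \<in> E" using xC a(3) by (simp add: E_def inner_commute)
  have "E \<noteq> C"
  proof
    assume "E = C"
    then have "C \<subseteq> {z. inner a z = 0}" unfolding E_def by blast
    then show False using hyp_zero R(4) a(1) by blast
  qed
  moreover have "E \<noteq> {0}" using xE assms(4) by blast
  ultimately have dE: "dim E = 1" using assms(2) Ef xE unfolding strictly_convex_cone_def by blast
  have "ray x \<subseteq> E"
  proof
    fix z assume "z \<in> ray x"
    then obtain c where c: "c \<ge> 0" "z = c *\<^sub>R x" unfolding ray_def by blast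
    then have "z \<in> C" using R(1) xC unfolding cone_def by blast
    then show "z \<in> E" using c a(3) by (simp add: E_def inner_commute)
  qed
  moreover have "E \<subseteq> ray x"
  proof
    fix z assume zE: "z \<in> E"
    have "span {x} = span E" using dE xE assms(4) by (intro dim_eq_span) auto
    then have "z \<in> span {x}" using zE span_base by blast
    then obtain k where k: "z = k *\<^sub>R x" by (auto simp: span_singleton)
    have zC: "z \<in> C" using zE E_def by blast
    have "k \<ge> 0"
    proof (rule ccontr)
      assume "\<not> k \<ge> 0"
      then have "(-1/k) *\<^sub>R z = - x" using k by simp
      moreover have "-1/k \<ge> 0" using \<open>\<not> k \<ge> 0\<close> by simp
      then have "(-1/k) *\<^sub>R z \<in> C" using zC R(1) unfolding cone_def by blast
      ultimately have "x = 0" using R(7) xC by metis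
      then show False using assms(4) by simp
    qed
    then show "z \<in> ray x" using k unfolding ray_def by blast
  qed
  ultimately have "E = ray x" by blast
  then show ?thesis unfolding extreme_ray_def using Ef assms(4) by blast
qed

lemma dim1_face:
  fixes F :: "'a::euclidean_space set"
  assumes "F \<subseteq> ray x0" "F \<noteq> {}" "F \<noteq> {0}"
  shows "dim F = 1"
proof -
  have "dim F \<le> 1" using dim_subset[OF assms(1)] dim_ray[of x0] by linarith
  moreover have "dim F \<noteq> 0" using assms(2,3) by auto
  ultimately show ?thesis by linarith
qed

theorem proposition8:
  fixes C :: "'a::euclidean_space set"
  assumes "DIM('a) \<ge> 2"
    and "regular_cone C"
  shows "smooth_cone C \<longleftrightarrow> strictly_convex_cone C \<and> strictly_convex_cone (polar_cone C)"
proof -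
  note R = regular_facts[OF assms(2)]
  note P = regular_facts[OF polar_regular[OF assms(2)]]
  show ?thesis
  proof
    assume sm: "smooth_cone C"
    have fr: "\<exists>R. extreme_ray C R \<and> x \<in> R" if "x \<in> frontier C" for x
      using sm that unfolding smooth_cone_def by blast
    have nd: "dim (normal_cone C x) = 1" if "extreme_ray C R" "x \<in> R" "x \<noteq> 0" for R x
      using sm that unfolding smooth_cone_def by blast
    have "strictly_convex_cone C"
      unfolding strictly_convex_cone_def
    proof (intro conjI allI impI)
      show "regular_cone C" by (rule assms(2))
      fix F assume F: "F face_of C \<and> F \<noteq> {} \<and> F \<noteq> C \<and> F \<noteq> {0}"
      have "rel_interior F \<noteq> {}" using F face_of_imp_convex rel_interior_eq_empty by blast
      then obtain x where x: "x \<in> rel_interior F" by blast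
      have xF: "x \<in> F" using x rel_interior_subset by blast
      have "x \<notin> interior C" using F face_of_disjoint_interior xF by blast
      moreover have "x \<in> C" using F face_of_imp_subset xF by blast
      ultimately have "x \<in> frontier C" using R(2) by (simp add: frontier_def)
      then obtain Rr where Rr: "extreme_ray C Rr" "x \<in> Rr" using fr by blast
      then obtain x0 where x0: "Rr = ray x0" "Rr face_of C" unfolding extreme_ray_def by blast
      have "F \<subseteq> Rr" using subset_of_face_of[OF x0(2)] F face_of_imp_subset x Rr(2) by blast
      then show "dim F = 1" using dim1_face F x0(1) by blast
    qed
    moreover have "strictly_convex_cone (polar_cone C)"
      unfolding strictly_convex_cone_def
    proof (intro conjI allI impI)
      show "regular_cone (polar_cone C)" by (rule polar_regular[OF assms(2)])
      fix G assume G: "G face_of polar_cone C \<and> G \<noteq> {} \<and> G \<noteq> polar_cone C \<and> G \<noteq> {0}"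
      have cG: "convex G" using G face_of_imp_convex by blast
      have "\<not> rel_interior G \<subseteq> {0}"
      proof
        assume "rel_interior G \<subseteq> {0}"
        then have "closure (rel_interior G) \<subseteq> {0}"
          by (rule closure_minimal[OF _ closed_singleton])
        then have "closure G \<subseteq> {0}" using convex_closure_rel_interior[OF cG] by simp
        then have "G \<subseteq> {0}" using closure_subset by blast
        then show False using G by blast
      qed
      then obtain y where y: "y \<in> rel_interior G" "y \<noteq> 0" by blast
      have yG: "y \<in> G" using y rel_interior_subset by blast
      have "y \<notin> interior (polar_cone C)" using G face_of_disjoint_interior yG by blast
      moreover have yP: "y \<in> polar_cone C" using G face_of_imp_subset yG by blast
      ultimately have "y \<in> frontier (polar_cone C)" using P(2) by (simp add: frontier_def)
      then obtain a where a: "a \<noteq> 0" "a \<in> polar_cone (polar_cone C)" "inner y a = 0"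
        using cone_support[OF P(1,2,3,4)] by blast
      have aC: "a \<in> C" using a(2) bipolar[OF R(1,2,3,5)] by blast
      have "a \<notin> interior C"
      proof
        assume "a \<in> interior C"
        then obtain e where e: "e > 0" "ball a e \<subseteq> C" using mem_interior by blast
        define z where "z = a + (e/2/norm y) *\<^sub>R y"
        have "dist a z = e/2" using y(2) e by (simp add: z_def dist_norm)
        then have "z \<in> C" using e by auto
        then have "inner z y \<le> 0" using yP unfolding polar_cone_def by blast
        moreover have "inner a y = 0" using a(3) by (simp add: inner_commute)
        then have "inner z y = (e/2/norm y) * inner y y"
          by (simp add: z_def inner_add_left)
        moreover have "(e/2/norm y) * inner y y > 0" using e y(2) by simp
        ultimately show False by linarith
      qed
      then have "a \<in> frontier C" using aC R(2) by (simp add: frontier_def)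
      then obtain Rr where Rr: "extreme_ray C Rr" "a \<in> Rr" using fr by blast
      have dN: "dim (normal_cone C a) = 1" using nd[OF Rr a(1)] .
      have Nf: "normal_cone C a face_of polar_cone C" using normal_face[OF R(1) aC] .
      have "y \<in> normal_cone C a" using normal_eq[OF R(1) aC] yP a(3)
        by (simp add: inner_commute)
      then have "G \<subseteq> normal_cone C a"
        using subset_of_face_of[OF Nf] G face_of_imp_subset y(1) by blast
      then have "dim G \<le> 1" using dim_subset dN by metis
      moreover have "dim G \<noteq> 0" using G by auto
      ultimately show "dim G = 1" by linarith
    qed
    ultimately show "strictly_convex_cone C \<and> strictly_convex_cone (polar_cone C)" by blast
  next
    assume sc: "strictly_convex_cone C \<and> strictly_convex_cone (polar_cone C)"
    have A: "\<exists>R. extreme_ray C R \<and> x \<in> R" if x: "x \<in> frontier C" for x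
    proof (cases "x = 0")
      case False
      then have "extreme_ray C (ray x)" using exray assms(2) sc x by blast
      moreover have "x \<in> ray x" unfolding ray_def by (rule CollectI, rule exI[of _ 1]) simp
      ultimately show ?thesis by blast
    next
      case True
      obtain q where q: "q \<in> frontier C" "q \<noteq> 0" using nonzero_frontier assms by blast
      then have "extreme_ray C (ray q)" using exray assms(2) sc by blast
      moreover have "x \<in> ray q" unfolding ray_def True by (rule CollectI, rule exI[of _ 0]) simp
      ultimately show ?thesis by blast
    qed
    have B: "dim (normal_cone C x) = 1" if er: "extreme_ray C Rr" "x \<in> Rr" "x \<noteq> 0" for Rr x
    proof -
      obtain x0 where x0: "Rr = ray x0" "Rr face_of C" using er(1) unfolding extreme_ray_def by blast
      have "dim Rr \<le> 1" using dim_ray[of x0] x0(1) by simp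
      then have "dim Rr < DIM('a)" using assms(1) by linarith
      then have "interior Rr = {}" by (rule empty_interior_lowdim)
      then have "Rr \<noteq> C" using R(4) by blast
      then have "x \<notin> interior C" using face_of_disjoint_interior x0(2) er(2) by blast
      moreover have xC: "x \<in> C" using x0(2) face_of_imp_subset er(2) by blast
      ultimately have "x \<in> frontier C" using R(2) by (simp add: frontier_def)
      then obtain a where a: "a \<noteq> 0" "a \<in> polar_cone C" "inner x a = 0"
        using cone_support[OF R(1,2,3,4)] by blast
      have aN: "a \<in> normal_cone C x" using normal_eq[OF R(1) xC] a by simp
      have "0 \<in> normal_cone C x" using normal_eq[OF R(1) xC] zero_polar by simp
      moreover have "normal_cone C x \<noteq> polar_cone C"
      proof
        assume "normal_cone C x = polar_cone C"
        then have "polar_cone C \<subseteq> {y. inner x y = 0}" using normal_eq[OF R(1) xC] by blast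
        then show False using hyp_zero P(4) er(3) by blast
      qed
      moreover have "normal_cone C x \<noteq> {0}" using aN a(1) by blast
      ultimately show ?thesis using sc normal_face[OF R(1) xC]
        unfolding strictly_convex_cone_def by blast
    qed
    show "smooth_cone C" unfolding smooth_cone_def using assms(2) A B by blast
  qed
qed

end
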